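(* Let $\lambda,\epsilon>0$ be constants with $\lambda+\epsilon<1$. Consider CVRP instances in an arbitrary metric space $(X,\delta)$, with a depot $O\in X$, a set $V\subseteq X$ of $n$ customers and capacity $k=k(n)$, where $k(n)\to\infty$ as $n\to\infty$. Then for all sufficiently large $n$ there exists a set $U\subseteq V$ with $|U|>(\lambda+\frac{\epsilon}{2})n$ such that $$\mathrm{OPT}\ \ge\ \mathrm{rad}+(1-\lambda-\epsilon)\sum_{x\in U}\delta\big(x,U\setminus\{x\}\big).$$
   Context: $\mathrm{OPT}$ is the minimum total cost of a collection of tours, each starting and ending at $O$ and visiting at most $k$ points of $V$, that together visit every point of $V$; the cost of a tour is the sum of $\delta$-distances between consecutive points. $\ell(x)=\delta(O,x)$ and $\mathrm{rad}=\frac{2}{k}\sum_{x\in V}\ell(x)$. For a point $x$ and a set $A$, $\delta(x,A)=\min_{a\in A}\delta(x,a)$ (with $\delta(x,\emptyset)=0$). *)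

theory Defs
  imports "HOL-Analysis.Analysis"
begin

fun path_cost :: "'a::metric_space list \<Rightarrow> real" where
  "path_cost [] = 0"
| "path_cost [x] = 0"
| "path_cost (x # y # zs) = dist x y + path_cost (y # zs)"

definition tour_cost :: "'a::metric_space \<Rightarrow> 'a list \<Rightarrow> real" where
  "tour_cost dep t = path_cost (dep # t @ [dep])"

definition feasible_solution :: "'a::metric_space set \<Rightarrow> nat \<Rightarrow> 'a list list \<Rightarrow> bool" where
  "feasible_solution V k T \<longleftrightarrow>
     (\<forall>t\<in>set T. set t \<subseteq> V \<and> length t \<le> k) \<and> V \<subseteq> (\<Union>t\<in>set T. set t)"

definition OPT :: "'a::metric_space \<Rightarrow> 'a set \<Rightarrow> nat \<Rightarrow> real" where
  "OPT dep V k = Inf {(\<Sum>t\<leftarrow>T. tour_cost dep t) | T. feasible_solution V k T}"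

definition rad :: "'a::metric_space \<Rightarrow> 'a set \<Rightarrow> nat \<Rightarrow> real" where
  "rad dep V k = 2 / real k * (\<Sum>x\<in>V. dist dep x)"

end

theory Submission
  imports Defs
begin

lemma exists_sorted_enum:
  fixes f :: "'b \<Rightarrow> real"
  assumes "finite P"
  shows "\<exists>ws. distinct ws \<and> set ws = P \<and> sorted (map f ws)"
proof -
  obtain xs where "set xs = P" "distinct xs" using finite_distinct_list[OF assms] by blast
  then show ?thesis by (intro exI[of _ "sort_key f xs"]) auto
qed

lemma seq_gap:
  fixes a g :: "nat \<Rightarrow> real"
  assumes "\<And>i. i < q \<Longrightarrow> a i \<le> g i" "\<And>i. i < q \<Longrightarrow> a (Suc i) \<le> g i" "j < q"
  shows "(\<Sum>i<Suc q. a i) \<le> (\<Sum>i<q. g i) + g j"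
  using assms
proof (induction q)
  case 0 then show ?case by simp
next
  case (Suc q)
  show ?case
  proof (cases "j < q")
    case True
    have "(\<Sum>i<Suc q. a i) \<le> (\<Sum>i<q. g i) + g j" using Suc True by auto
    moreover have "a (Suc q) \<le> g q" using Suc by auto
    ultimately show ?thesis by simp
  next
    case False
    then have j: "j = q" using Suc by auto
    have "(\<Sum>i<Suc q. a i) \<le> (\<Sum>i<Suc q. g i)" using Suc by (intro sum_mono) auto
    moreover have "a (Suc q) \<le> g q" using Suc by auto
    ultimately show ?thesis using j by simp
  qed
qed

lemma seq_avg:
  fixes a g :: "nat \<Rightarrow> real"
  assumes "\<And>i. i < q \<Longrightarrow> a i \<le> g i" "\<And>i. i < q \<Longrightarrow> a (Suc i) \<le> g i" "0 < q"
  shows "(\<Sum>i<Suc q. a i) * q \<le> (\<Sum>i<q. g i) * (Suc q)"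
proof -
  have "(\<Sum>j<q. (\<Sum>i<Suc q. a i)) \<le> (\<Sum>j<q. (\<Sum>i<q. g i) + g j)"
    by (intro sum_mono seq_gap) (use assms in auto)
  then show ?thesis by (simp add: sum.distrib algebra_simps)
qed

lemma seq_cyc:
  fixes a g :: "nat \<Rightarrow> real"
  assumes "\<And>i. i < q \<Longrightarrow> a i \<le> g i" "a q \<le> h"
  shows "(\<Sum>i<Suc q. a i) \<le> (\<Sum>i<q. g i) + h"
proof -
  have "(\<Sum>i<q. a i) \<le> (\<Sum>i<q. g i)" using assms by (intro sum_mono) auto
  then show ?thesis using assms by simp
qed

lemma chain_lemma:
  fixes y :: "'a::metric_space \<Rightarrow> real"
  assumes fin: "finite P" and c2: "card P \<ge> 2"
    and lip: "\<And>a b. a \<in> P \<Longrightarrow> b \<in> P \<Longrightarrow> dist a b \<le> \<bar>y a - y b\<bar>"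
  shows "\<exists>lo\<in>P. \<exists>hi\<in>P.
     (\<Sum>x\<in>P. infdist x (P - {x})) \<le> (y hi - y lo) + dist hi lo \<and>
     (\<Sum>x\<in>P. infdist x (P - {x})) * (card P - 1) \<le> (y hi - y lo) * card P"
proof -
  obtain ws where ws: "distinct ws" "set ws = P" "sorted (map y ws)"
    using exists_sorted_enum[OF fin] by blast
  define p where "p = card P"
  have len: "length ws = p" using distinct_card[OF ws(1)] ws(2) p_def by simp
  define q where "q = p - 1"
  have pq: "p = Suc q" "0 < q" using c2 p_def q_def by auto
  define a where "a i = infdist (ws!i) (P - {ws!i})" for i
  define g where "g i = y (ws!Suc i) - y (ws!i)" for i
  have sumeq: "(\<Sum>x\<in>P. infdist x (P - {x})) = (\<Sum>i<Suc q. a i)"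
  proof -
    have "(\<Sum>x\<in>P. infdist x (P - {x})) = sum_list (map (\<lambda>x. infdist x (P - {x})) ws)"
      using ws by (simp add: sum_list_distinct_conv_sum_set)
    also have "\<dots> = (\<Sum>i<length ws. infdist (ws!i) (P - {ws!i}))"
      by (simp add: sum_list_sum_nth atLeast0LessThan)
    finally show ?thesis using len pq a_def by simp
  qed
  have mono: "y (ws!i) \<le> y (ws!j)" if "i \<le> j" "j < p" for i j
  proof -
    have "(map y ws)!i \<le> (map y ws)!j" using sorted_nth_mono[OF ws(3), of i j] that len by simp
    then show ?thesis using that len by simp
  qed
  have inP: "ws!i \<in> P" if "i < p" for i using that ws len nth_mem by blast
  have dneq: "ws!i \<noteq> ws!j" if "i < p" "j < p" "i \<noteq> j" for i j
    using nth_eq_iff_index_eq[OF ws(1), of i j] that len by simp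
  have dg: "dist (ws!i) (ws!Suc i) \<le> g i" if "i < q" for i
  proof -
    have "dist (ws!i) (ws!Suc i) \<le> \<bar>y (ws!i) - y (ws!Suc i)\<bar>" using lip inP that pq by simp
    also have "\<dots> = g i" using mono[of i "Suc i"] that pq g_def by simp
    finally show ?thesis .
  qed
  have a1: "a i \<le> g i" if "i < q" for i
  proof -
    have "a i \<le> dist (ws!i) (ws!Suc i)" unfolding a_def
      proof (rule infdist_le)
      show "ws ! Suc i \<in> P - {ws ! i}" using that pq inP[of "Suc i"] dneq[of i "Suc i"] by simp
    qed
    then show ?thesis using dg[OF that] by simp
  qed
  have a2: "a (Suc i) \<le> g i" if "i < q" for i
  proof -
    have "a (Suc i) \<le> dist (ws!Suc i) (ws!i)" unfolding a_def
      proof (rule infdist_le)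
      show "ws ! i \<in> P - {ws ! Suc i}" using that pq inP[of i] dneq[of i "Suc i"] by simp
    qed
    then show ?thesis using dg[OF that] by (simp add: dist_commute)
  qed
  have a3: "a q \<le> dist (ws!q) (ws!0)" unfolding a_def
  proof (rule infdist_le)
    show "ws ! 0 \<in> P - {ws ! q}" using pq inP[of 0] dneq[of 0 q] by simp
  qed
  have tel: "(\<Sum>i<q. g i) = y (ws!q) - y (ws!0)"
    unfolding g_def by (rule sum_lessThan_telescope[where f="\<lambda>i. y (ws!i)"])
  have r1: "(\<Sum>i<Suc q. a i) \<le> (\<Sum>i<q. g i) + dist (ws!q) (ws!0)"
    by (rule seq_cyc) (use a1 a3 in auto)
  have r2: "(\<Sum>i<Suc q. a i) * q \<le> (\<Sum>i<q. g i) * (Suc q)"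
    by (rule seq_avg) (use a1 a2 pq in auto)
  show ?thesis
  proof (intro bexI conjI)
    show "(\<Sum>x\<in>P. infdist x (P - {x})) \<le> y (ws!q) - y (ws!0) + dist (ws!q) (ws!0)"
      using r1 sumeq tel by simp
    have "real (card P - 1) = real q" "real (card P) = real (Suc q)" using pq p_def by auto
    then show "(\<Sum>x\<in>P. infdist x (P - {x})) * real (card P - 1) \<le> (y (ws!q) - y (ws!0)) * real (card P)"
      using r2 sumeq tel by simp
    show "ws!0 \<in> P" "ws!q \<in> P" using inP pq by auto
  qed
qed


definition walkS :: "'a::metric_space \<Rightarrow> real \<Rightarrow> 'a set \<Rightarrow> ('a \<Rightarrow> real) \<Rightarrow> bool" where
  "walkS dep C S y \<longleftrightarrow> (\<forall>x\<in>S. dist dep x \<le> y x \<and> y x \<le> C - dist dep x) \<and>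
     (\<forall>a\<in>S. \<forall>b\<in>S. dist a b \<le> \<bar>y a - y b\<bar>)"

lemma walkS_mono: "walkS dep C S y \<Longrightarrow> S' \<subseteq> S \<Longrightarrow> walkS dep C S' y"
  unfolding walkS_def by blast

lemma walkS_union:
  assumes w1: "walkS dep C1 S1 y1" and w2: "walkS dep C2 S2 y2" and d: "S1 \<inter> S2 = {}"
    and c1: "C1 \<ge> 0" and c2: "C2 \<ge> 0"
  shows "walkS dep (C1 + C2) (S1 \<union> S2) (\<lambda>x. if x \<in> S1 then y1 x else C1 + y2 x)"
  unfolding walkS_def
proof (intro conjI ballI)
  fix x assume x: "x \<in> S1 \<union> S2"
  show "dist dep x \<le> (if x \<in> S1 then y1 x else C1 + y2 x)"
    using x w1 w2 c1 unfolding walkS_def by auto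
  show "(if x \<in> S1 then y1 x else C1 + y2 x) \<le> C1 + C2 - dist dep x"
    using x w1 w2 c2 unfolding walkS_def by auto
next
  fix a b assume a: "a \<in> S1 \<union> S2" and b: "b \<in> S1 \<union> S2"
  have cross: "dist u v \<le> \<bar>y1 u - (C1 + y2 v)\<bar>" if u: "u \<in> S1" and v: "v \<in> S2" for u v
  proof -
    have "dist u v \<le> dist dep u + dist dep v"
      by (metis dist_commute dist_triangle)
    also have "\<dots> \<le> (C1 - y1 u) + y2 v"
    proof -
      have "y1 u \<le> C1 - dist dep u" using u w1 unfolding walkS_def by blast
      moreover have "dist dep v \<le> y2 v" using v w2 unfolding walkS_def by blast
      ultimately show ?thesis by linarith
    qed
    also have "\<dots> \<le> \<bar>y1 u - (C1 + y2 v)\<bar>" by simp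
    finally show ?thesis .
  qed
  show "dist a b \<le> \<bar>(if a \<in> S1 then y1 a else C1 + y2 a) - (if b \<in> S1 then y1 b else C1 + y2 b)\<bar>"
  proof (cases "a \<in> S1")
    case True
    show ?thesis
    proof (cases "b \<in> S1")
      case True with \<open>a \<in> S1\<close> show ?thesis using w1 unfolding walkS_def by auto
    next
      case False then have "b \<in> S2" using b by auto
      then show ?thesis using cross[OF \<open>a \<in> S1\<close>] False True by simp
    qed
  next
    case False then have aS2: "a \<in> S2" using a by auto
    show ?thesis
    proof (cases "b \<in> S1")
      case True then show ?thesis using cross[OF True aS2] False
        by (simp add: dist_commute abs_minus_commute)
    next
      case False then have "b \<in> S2" using b by auto
      then show ?thesis using aS2 w2 \<open>a \<notin> S1\<close> False unfolding walkS_def by auto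
    qed
  qed
qed

lemma walkS_Union:
  assumes "finite J" "disjoint_family_on S J"
    and "\<And>i. i \<in> J \<Longrightarrow> \<exists>y. walkS dep (C i) (S i) y" "\<And>i. i \<in> J \<Longrightarrow> C i \<ge> 0"
  shows "\<exists>y. walkS dep (\<Sum>i\<in>J. C i) (\<Union>i\<in>J. S i) y"
  using assms
proof (induction J rule: finite_induct)
  case empty then show ?case by (simp add: walkS_def)
next
  case (insert j J)
  have dJ: "disjoint_family_on S J" using insert.prems(1) by (simp add: disjoint_family_on_def)
  obtain y1 where y1: "walkS dep (\<Sum>i\<in>J. C i) (\<Union>i\<in>J. S i) y1"
    using insert.IH[OF dJ] insert.prems by blast
  obtain y2 where y2: "walkS dep (C j) (S j) y2" using insert.prems by blast
  have d: "(\<Union>i\<in>J. S i) \<inter> S j = {}"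
    using insert.prems(1) insert.hyps(2) unfolding disjoint_family_on_def by fastforce
  have "walkS dep ((\<Sum>i\<in>J. C i) + C j) ((\<Union>i\<in>J. S i) \<union> S j)
      (\<lambda>x. if x \<in> (\<Union>i\<in>J. S i) then y1 x else (\<Sum>i\<in>J. C i) + y2 x)"
    by (rule walkS_union[OF y1 y2 d]) (use insert.prems in \<open>auto intro: sum_nonneg\<close>)
  then show ?case using insert.hyps by (auto simp: add.commute Un_commute)
qed

lemma walkS_nonneg: "walkS dep C S y \<Longrightarrow> x \<in> S \<Longrightarrow> 0 \<le> y x \<and> y x \<le> C \<and> 2 * dist dep x \<le> C"
proof -
  assume w: "walkS dep C S y" and x: "x \<in> S"
  then have "dist dep x \<le> y x" "y x \<le> C - dist dep x" unfolding walkS_def by auto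
  moreover have "0 \<le> dist dep x" by simp
  ultimately show ?thesis by linarith
qed

lemma walkS_cyc:
  assumes w: "walkS dep C P y" and fin: "finite P" and c2: "card P \<ge> 2"
  shows "(\<Sum>x\<in>P. infdist x (P - {x})) \<le> C"
proof -
  have lip: "\<And>a b. a \<in> P \<Longrightarrow> b \<in> P \<Longrightarrow> dist a b \<le> \<bar>y a - y b\<bar>" using w unfolding walkS_def by blast
  obtain lo hi where lh: "lo \<in> P" "hi \<in> P" "(\<Sum>x\<in>P. infdist x (P - {x})) \<le> (y hi - y lo) + dist hi lo"
    using chain_lemma[OF fin c2 lip] by blast
  have "dist hi lo \<le> dist dep hi + dist dep lo" by (metis dist_commute dist_triangle)
  moreover have "y hi \<le> C - dist dep hi" "dist dep lo \<le> y lo" using lh w unfolding walkS_def by auto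
  ultimately show ?thesis using lh by linarith
qed

lemma walkS_rad:
  assumes w: "walkS dep C S y"
  shows "2 * (\<Sum>x\<in>S. dist dep x) \<le> real (card S) * C"
proof (cases "finite S")
  case True
  have "2 * (\<Sum>x\<in>S. dist dep x) = (\<Sum>x\<in>S. 2 * dist dep x)" by (simp add: sum_distrib_left)
  also have "\<dots> \<le> (\<Sum>x\<in>S. C)" by (rule sum_mono) (use walkS_nonneg[OF w] in auto)
  finally show ?thesis by simp
next
  case False
  then show ?thesis by simp
qed


lemma walkS_big:
  assumes w: "walkS dep C S y" and fin: "finite S" and p2: "2 \<le> p" and pm: "p \<le> card S"
    and mK: "card S \<le> K"
  shows "\<exists>B R. B \<subseteq> S \<and> card B = p \<and> 0 \<le> R \<and>
     (1 - real p / real K) * R \<le> C - 2 / real K * (\<Sum>x\<in>S. dist dep x) \<and>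
     (\<Sum>x\<in>B. infdist x (B - {x})) * (real p - 1) \<le> R * real p"
proof -
  define m where "m = card S"
  define \<kappa> where "\<kappa> x = \<bar>2 * y x - C\<bar>" for x
  obtain zs where zs: "distinct zs" "set zs = S" "sorted (map \<kappa> zs)"
    using exists_sorted_enum[OF fin] by blast
  have len: "length zs = m" using distinct_card[OF zs(1)] zs(2) m_def by simp
  define B where "B = set (take p zs)"
  define R where "R = \<kappa> (zs ! (p - 1))"
  have Bsub: "B \<subseteq> S" unfolding B_def using zs(2) by (meson set_take_subset)
  have cardB: "card B = p" unfolding B_def using distinct_card[of "take p zs"] zs(1) len pm m_def by simp
  have mono: "\<kappa> (zs!i) \<le> \<kappa> (zs!j)" if "i \<le> j" "j < m" for i j
  proof -
    have "(map \<kappa> zs)!i \<le> (map \<kappa> zs)!j" using sorted_nth_mono[OF zs(3), of i j] that len by simp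
    then show ?thesis using that len by simp
  qed
  have Bk: "\<kappa> b \<le> R" if bB: "b \<in> B" for b
  proof -
    obtain i where "i < length (take p zs)" "take p zs ! i = b" using bB unfolding B_def in_set_conv_nth by blast
    then have "i < p" "zs ! i = b" using len pm m_def by auto
    then show ?thesis unfolding R_def using mono[of i "p - 1"] pm p2 m_def by simp
  qed
  have Rk: "R \<le> \<kappa> c" if cSB: "c \<in> S - B" for c
  proof -
    obtain j where j: "j < m" "zs ! j = c" proof -
      have "c \<in> set zs" using cSB zs(2) by simp
      then show ?thesis unfolding in_set_conv_nth using len by (metis that)
    qed
    have "\<not> j < p"
    proof
      assume "j < p"
      then have "take p zs ! j = c" using j by simp
      moreover have "j < length (take p zs)" using \<open>j < p\<close> j len by simp
      ultimately have "c \<in> B" unfolding B_def in_set_conv_nth by blast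
      then show False using cSB by simp
    qed
    then show ?thesis unfolding R_def using mono[of "p - 1" j] j p2 by simp
  qed
  have yb: "0 \<le> y x \<and> y x \<le> C" if "x \<in> S" for x using walkS_nonneg[OF w that] by simp
  have kC: "\<kappa> x \<le> C" "0 \<le> \<kappa> x" if "x \<in> S" for x using yb[OF that] unfolding \<kappa>_def by auto
  have p1: "p - 1 < m" using pm p2 m_def by simp
  have R0: "0 \<le> R" "R \<le> C" unfolding R_def using kC[of "zs ! (p - 1)"] zs(2) len p1 nth_mem by auto
  have l2: "2 * dist dep x \<le> C - \<kappa> x" if "x \<in> S" for x
  proof -
    have "dist dep x \<le> y x" "y x \<le> C - dist dep x" using w that unfolding walkS_def by auto
    then show ?thesis unfolding \<kappa>_def by (simp add: abs_if)
  qed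
  have s1: "2 * (\<Sum>x\<in>S. dist dep x) \<le> (\<Sum>x\<in>S. C - \<kappa> x)"
    proof -
    have "2 * (\<Sum>x\<in>S. dist dep x) = (\<Sum>x\<in>S. 2 * dist dep x)" by (simp add: sum_distrib_left)
    also have "\<dots> \<le> (\<Sum>x\<in>S. C - \<kappa> x)" by (rule sum_mono) (rule l2)
    finally show ?thesis .
  qed
  have s2: "(\<Sum>x\<in>S. \<kappa> x) \<ge> (\<Sum>x\<in>S - B. \<kappa> x)"
    proof (rule sum_mono2[OF fin])
    show "S - B \<subseteq> S" by blast
    fix b assume "b \<in> S - (S - B)" then show "0 \<le> \<kappa> b" using kC(2) by blast
  qed
  have s3: "(\<Sum>x\<in>S - B. \<kappa> x) \<ge> (\<Sum>x\<in>S - B. R)" by (rule sum_mono) (use Rk in auto)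
  have cSB: "card (S - B) = m - p" using card_Diff_subset[OF finite_subset[OF Bsub fin] Bsub] cardB m_def by simp
  have s4: "2 * (\<Sum>x\<in>S. dist dep x) \<le> real m * C - real (m - p) * R"
    using s1 s2 s3 cSB m_def by (simp add: sum_subtractf)
  have Kpos: "real K > 0" using mK pm p2 m_def by simp
  have key: "(1 - real p / real K) * R \<le> C - 2 / real K * (\<Sum>x\<in>S. dist dep x)"
  proof -
    have "2 / real K * (\<Sum>x\<in>S. dist dep x) \<le> (real m * C - real (m - p) * R) / real K"
      using s4 Kpos by (simp add: divide_right_mono)
    moreover have "(1 - real p / real K) * R \<le> C - (real m * C - real (m - p) * R) / real K"
    proof -
      have mK': "real m \<le> real K" using mK m_def by simp
      have "real (m - p) = real m - real p" using pm m_def by simp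
      then have "C - (real m * C - real (m - p) * R) / real K - (1 - real p / real K) * R
          = (C - R) * (real K - real m) / real K" using Kpos by (simp add: field_simps)
      moreover have "(C - R) * (real K - real m) / real K \<ge> 0" using R0 mK' Kpos by simp
      ultimately show ?thesis by linarith
    qed
    ultimately show ?thesis by linarith
  qed
  have finB: "finite B" using Bsub fin finite_subset by blast
  have lip: "\<And>a b. a \<in> B \<Longrightarrow> b \<in> B \<Longrightarrow> dist a b \<le> \<bar>y a - y b\<bar>"
    using w Bsub unfolding walkS_def by blast
  obtain lo hi where lh: "lo \<in> B" "hi \<in> B"
     "(\<Sum>x\<in>B. infdist x (B - {x})) * (card B - 1) \<le> (y hi - y lo) * card B"
    using chain_lemma[OF finB _ lip] cardB p2 by auto
  have "y hi - y lo \<le> R" using Bk[OF lh(1)] Bk[OF lh(2)] unfolding \<kappa>_def by auto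
  then have "(y hi - y lo) * card B \<le> R * real p" using cardB by (simp add: mult_right_mono)
  moreover have "real (card B - 1) = real p - 1" using cardB p2 by simp
  ultimately have ch: "(\<Sum>x\<in>B. infdist x (B - {x})) * (real p - 1) \<le> R * real p" using lh by simp
  show ?thesis using Bsub cardB R0 key ch by blast
qed


lemma path_cost_sum: "path_cost xs = (\<Sum>j < length xs - 1. dist (xs!j) (xs!Suc j))"
proof (induction xs rule: path_cost.induct)
  case 1 then show ?case by simp
next
  case (2 x) then show ?case by simp
next
  case (3 x y zs)
  have "(\<Sum>j < length (x # y # zs) - 1. dist ((x # y # zs)!j) ((x # y # zs)!Suc j))
      = (\<Sum>j < Suc (length zs). dist ((x # y # zs)!j) ((x # y # zs)!Suc j))" by simp
  also have "\<dots> = dist x y + (\<Sum>j < length zs. dist ((y # zs)!j) ((y # zs)!Suc j))"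
    by (subst sum.lessThan_Suc_shift) simp
  finally show ?case using 3 by simp
qed

lemma dist_cum:
  fixes f :: "nat \<Rightarrow> 'a::metric_space"
  assumes "a \<le> b"
  shows "dist (f a) (f b) \<le> (\<Sum>j<b. dist (f j) (f (Suc j))) - (\<Sum>j<a. dist (f j) (f (Suc j)))"
  using assms
proof (induction b rule: dec_induct)
  case base then show ?case by simp
next
  case (step n)
  have "dist (f a) (f (Suc n)) \<le> dist (f a) (f n) + dist (f n) (f (Suc n))" by (rule dist_triangle)
  then show ?case using step by simp
qed

lemma walkS_tour: "\<exists>y. walkS dep (tour_cost dep t) (set t) y"
proof -
  define L where "L = dep # t @ [dep]"
  define f where "f j = L ! j" for j
  define cum where "cum i = (\<Sum>j<i. dist (f j) (f (Suc j)))" for i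
  define n where "n = length t"
  have C: "tour_cost dep t = cum (Suc n)"
    unfolding tour_cost_def path_cost_sum cum_def f_def L_def n_def by simp
  have f0: "f 0 = dep" and fn: "f (Suc n) = dep" unfolding f_def L_def n_def by (auto simp: nth_append)
  have fi: "f (Suc i) = t ! i" if "i < n" for i using that unfolding f_def L_def n_def by (simp add: nth_append)
  define idx where "idx x = (SOME i. i < n \<and> t ! i = x)" for x
  have idx: "idx x < n \<and> t ! idx x = x" if "x \<in> set t" for x
  proof -
    have "\<exists>i. i < n \<and> t ! i = x" using that unfolding n_def in_set_conv_nth by blast
    then show ?thesis unfolding idx_def by (rule someI_ex)
  qed
  define y where "y x = cum (Suc (idx x))" for x
  have dc: "dist (f a) (f b) \<le> cum b - cum a" if "a \<le> b" for a b
    unfolding cum_def by (rule dist_cum[OF that])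
  have "walkS dep (cum (Suc n)) (set t) y"
    unfolding walkS_def
  proof (intro conjI ballI)
    fix x assume x: "x \<in> set t"
    have fx: "f (Suc (idx x)) = x" using idx[OF x] fi by auto
    show "dist dep x \<le> y x" using dc[of 0 "Suc (idx x)"] f0 fx unfolding y_def cum_def by simp
    show "y x \<le> cum (Suc n) - dist dep x"
      using dc[of "Suc (idx x)" "Suc n"] fn fx idx[OF x] unfolding y_def by (simp add: dist_commute)
  next
    fix a b assume a: "a \<in> set t" and b: "b \<in> set t"
    have fa: "f (Suc (idx a)) = a" using idx[OF a] fi by auto
    have fb: "f (Suc (idx b)) = b" using idx[OF b] fi by auto
    show "dist a b \<le> \<bar>y a - y b\<bar>"
    proof (cases "idx a \<le> idx b")
      case True
      then show ?thesis using dc[of "Suc (idx a)" "Suc (idx b)"] fa fb unfolding y_def by simp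
    next
      case False
      then show ?thesis using dc[of "Suc (idx b)" "Suc (idx a)"] fa fb unfolding y_def
        by (simp add: dist_commute)
    qed
  qed
  then show ?thesis using C by auto
qed


lemma union_sum:
  fixes P :: "nat \<Rightarrow> 'a::metric_space set"
  assumes fJ: "finite J" and dj: "disjoint_family_on P J"
    and fP: "\<And>i. i \<in> J \<Longrightarrow> finite (P i)" and c2: "\<And>i. i \<in> J \<Longrightarrow> P i = {} \<or> card (P i) \<ge> 2"
  shows "(\<Sum>x\<in>(\<Union>i\<in>J. P i). infdist x ((\<Union>i\<in>J. P i) - {x}))
     \<le> (\<Sum>i\<in>J. \<Sum>x\<in>P i. infdist x (P i - {x}))"
proof -
  define U where "U = (\<Union>i\<in>J. P i)"
  have "(\<Sum>x\<in>U. infdist x (U - {x})) = (\<Sum>i\<in>J. \<Sum>x\<in>P i. infdist x (U - {x}))"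
    unfolding U_def by (rule sum.UNION_disjoint_family) (use fJ fP dj in auto)
  also have "\<dots> \<le> (\<Sum>i\<in>J. \<Sum>x\<in>P i. infdist x (P i - {x}))"
  proof (intro sum_mono)
    fix i x assume i: "i \<in> J" and x: "x \<in> P i"
    have "card (P i) \<ge> 2" using c2[OF i] x by auto
    moreover have "card (P i - {x}) = card (P i) - 1" using card_Diff_singleton[OF x] .
    ultimately have "card (P i - {x}) \<noteq> 0" by simp
    then have "P i - {x} \<noteq> {}" by (metis card.empty)
    moreover have "P i - {x} \<subseteq> U - {x}" unfolding U_def using i by blast
    ultimately show "infdist x (U - {x}) \<le> infdist x (P i - {x})" by (rule infdist_mono[rotated])
  qed
  finally show ?thesis unfolding U_def .
qed


lemma num_big:
  fixes lam eps :: real and K s :: nat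
  assumes l: "0 < lam" and e: "0 < eps" and le: "lam + eps < 1"
    and K1: "real K * eps \<ge> 8" and K2: "(lam + 3*eps/4) * (lam + eps) * real K \<ge> 8/eps + 1"
    and s1: "(lam + eps) * real K < real s" and s2: "s \<le> K"
    and p: "p = nat \<lceil>(lam + 3*eps/4) * real s\<rceil>"
  shows "2 \<le> p \<and> p \<le> s \<and> (1 - lam - eps) * real p / (real p - 1) \<le> 1 - real p / real K
         \<and> real p \<ge> (lam + 3*eps/4) * real s"
proof -
  define g where "g = lam + 3*eps/4"
  have g0: "0 < g" "g < 1" using l e le g_def by auto
  have gsn: "0 \<le> g * real s" using g0 by simp
  have pr: "real p = of_int \<lceil>g * real s\<rceil>" unfolding p g_def using gsn g_def by simp
  have pl: "real p \<ge> g * real s" unfolding pr by (rule le_of_int_ceiling)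
  have pu: "real p < g * real s + 1" using ceiling_correct[of "g * real s"] unfolding pr by linarith
  have gs: "g * real s > g * (lam + eps) * real K"
    using s1 g0 by (simp add: mult.assoc)
  have K2': "g * (lam + eps) * real K \<ge> 8/eps + 1" using K2 g_def by simp
  have p8: "real p - 1 \<ge> 8 / eps" using pl gs K2' by linarith
  have e1: "eps < 1" using le l by linarith
  have e8: "8 / eps > 8" using e e1 by (simp add: less_divide_eq)
  have p2: "2 \<le> p" using p8 e8 by linarith
  have ps: "p \<le> s"
  proof -
    have "g * real s \<le> real s" using g0 by (simp add: mult_left_le_one_le)
    then have "real p < real s + 1" using pu by linarith
    then show ?thesis by linarith
  qed
  have Kpos: "real K > 0"
  proof (rule ccontr)
    assume "\<not> real K > 0" then have "real K = 0" by simp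
    then show False using K1 by simp
  qed
  have iK: "1 / real K \<le> eps / 8" using K1 Kpos e by (auto simp: divide_simps mult.commute)
  have ip0: "1 / (real p - 1) \<le> 1 / (8 / eps)"
  proof (rule divide_left_mono)
    have a: "0 < 8 / eps" using e by simp
    then have "0 < real p - 1" using p8 by linarith
    then show "0 < (real p - 1) * (8 / eps)" using a by simp
  qed (use p8 in auto)
  have ip: "1 / (real p - 1) \<le> eps / 8" using ip0 by simp
  have A: "(1 - lam - eps) * real p / (real p - 1) = (1 - lam - eps) + (1 - lam - eps) / (real p - 1)"
  proof -
    have "real p - 1 \<noteq> 0" using p2 by simp
    then show ?thesis by (simp add: field_simps)
  qed
  have B: "(1 - lam - eps) / (real p - 1) \<le> 1 / (real p - 1)"
    using p2 l e by (simp add: divide_right_mono)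
  have C0: "real p / real K \<le> (g * real s + 1) / real K"
    by (rule divide_right_mono) (use pu Kpos in auto)
  have C: "real p / real K \<le> g * (real s / real K) + 1 / real K"
    using C0 by (simp add: add_divide_distrib)
  have D: "real s / real K \<le> 1" using s2 Kpos by simp
  have E: "g * (real s / real K) \<le> g * 1" using D g0 by (intro mult_left_mono) auto
  have "(1 - lam - eps) * real p / (real p - 1) \<le> 1 - real p / real K"
    using A B C E iK ip g_def by linarith
  then show ?thesis using p2 ps pl g_def by simp
qed


lemma path_cost_nonneg: "path_cost xs \<ge> 0"
  unfolding path_cost_sum by (rule sum_nonneg) simp

lemma main_T:
  fixes lam eps :: real and K :: nat and dep :: "'a::metric_space"
  assumes l: "0 < lam" and e: "0 < eps" and le: "lam + eps < 1"
    and K1: "real K * eps \<ge> 8" and K2: "(lam + 3*eps/4) * (lam + eps) * real K \<ge> 8/eps + 1"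
    and nV: "real (card V) * eps > 4" and fin: "finite V" and feas: "feasible_solution V K T"
  shows "\<exists>U\<subseteq>V. real (card U) > (lam + eps/2) * real (card V) \<and>
     (\<Sum>t\<leftarrow>T. tour_cost dep t) \<ge> rad dep V K + (1 - lam - eps) * (\<Sum>x\<in>U. infdist x (U - {x}))"
proof -
  define m where "m = length T"
  define I where "I = {..<m}"
  define S where "S i = set (T!i) - (\<Union>j<i. set (T!j))" for i
  define C where "C i = tour_cost dep (T!i)" for i
  define r where "r i = 2 / real K * (\<Sum>x\<in>S i. dist dep x)" for i
  define g where "g = lam + 3*eps/4"
  define c where "c = 1 - lam - eps"
  have Kpos: "real K > 0"
  proof (rule ccontr)
    assume "\<not> real K > 0" then have "real K = 0" by simp
    then show False using K1 by simp
  qed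
  have c0: "0 \<le> c" "c < 1" using le l e c_def by auto
  have finI: "finite I" unfolding I_def by simp
  have tsub: "set (T!i) \<subseteq> V \<and> length (T!i) \<le> K" if "i \<in> I" for i
  proof -
    have "T!i \<in> set T" using that unfolding I_def m_def by simp
    then show ?thesis using feas unfolding feasible_solution_def by blast
  qed
  have Ssub: "S i \<subseteq> V" if "i \<in> I" for i using tsub[OF that] unfolding S_def by blast
  have finS: "finite (S i)" for i unfolding S_def by simp
  have cardS: "card (S i) \<le> K" if "i \<in> I" for i
  proof -
    have "card (S i) \<le> card (set (T!i))" unfolding S_def by (rule card_mono) auto
    also have "\<dots> \<le> length (T!i)" by (rule card_length)
    finally show ?thesis using tsub[OF that] by simp
  qed
  have disj: "disjoint_family_on S I"
    unfolding disjoint_family_on_def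
  proof (intro ballI impI)
    fix i j assume "i \<in> I" "j \<in> I" "i \<noteq> j"
    then consider "i < j" | "j < i" by linarith
    then show "S i \<inter> S j = {}"
      by cases (auto simp: S_def)
  qed
  have Vun: "V = (\<Union>i\<in>I. S i)"
  proof
    show "(\<Union>i\<in>I. S i) \<subseteq> V" using Ssub by blast
    show "V \<subseteq> (\<Union>i\<in>I. S i)"
    proof
      fix x assume x: "x \<in> V"
      then obtain t where "t \<in> set T" "x \<in> set t" using feas unfolding feasible_solution_def by blast
      then have ex: "\<exists>i. i < m \<and> x \<in> set (T!i)" unfolding m_def by (metis in_set_conv_nth)
      define i0 where "i0 = (LEAST i. i < m \<and> x \<in> set (T!i))"
      have i0: "i0 < m \<and> x \<in> set (T!i0)" unfolding i0_def by (rule LeastI_ex[OF ex])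
      have "\<not> (j < m \<and> x \<in> set (T!j))" if "j < i0" for j
        using not_less_Least[OF that[unfolded i0_def]] .
      then have "x \<in> S i0" using i0 unfolding S_def by auto
      then show "x \<in> (\<Union>i\<in>I. S i)" using i0 unfolding I_def by blast
    qed
  qed
  have costeq: "(\<Sum>t\<leftarrow>T. tour_cost dep t) = (\<Sum>i\<in>I. C i)"
    unfolding I_def C_def m_def by (simp add: sum_list_sum_nth atLeast0LessThan)
  have radeq: "rad dep V K = (\<Sum>i\<in>I. r i)"
  proof -
    have "(\<Sum>x\<in>V. dist dep x) = (\<Sum>i\<in>I. \<Sum>x\<in>S i. dist dep x)"
      unfolding Vun by (rule sum.UNION_disjoint_family) (use finI finS disj in auto)
    then show ?thesis unfolding rad_def r_def by (simp add: sum_distrib_left)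
  qed
  have walk: "\<exists>y. walkS dep (C i) (S i) y" if "i \<in> I" for i
  proof -
    obtain y where "walkS dep (C i) (set (T!i)) y" using walkS_tour unfolding C_def by blast
    then show ?thesis using walkS_mono[of dep "C i" "set (T!i)" y "S i"] unfolding S_def by blast
  qed
  have Cnn: "C i \<ge> 0" for i unfolding C_def tour_cost_def by (rule path_cost_nonneg)
  have rb: "r i \<le> real (card (S i)) / real K * C i" if iI0: "i \<in> I" for i
  proof -
    obtain y where "walkS dep (C i) (S i) y" using walk[OF iI0] by blast
    from walkS_rad[OF this] have "2 * (\<Sum>x\<in>S i. dist dep x) \<le> real (card (S i)) * C i" .
    then have "2 * (\<Sum>x\<in>S i. dist dep x) / real K \<le> real (card (S i)) * C i / real K"
      using Kpos by (simp add: divide_right_mono)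
    then show ?thesis unfolding r_def by simp
  qed
  define Is where "Is = {i\<in>I. real (card (S i)) \<le> (lam + eps) * real K}"
  define Ib where "Ib = I - Is"
  have IsI: "Is \<subseteq> I" unfolding Is_def by blast
  define W where "W = (\<Union>i\<in>Is. S i)"
  define Us where "Us = (if 2 \<le> card W then W else {})"
  have finW: "finite W" unfolding W_def using finI IsI finS by (meson finite_UN_I finite_subset)
  obtain yW where yW: "walkS dep (\<Sum>i\<in>Is. C i) W yW"
  proof -
    have "\<exists>y. walkS dep (\<Sum>i\<in>Is. C i) (\<Union>i\<in>Is. S i) y"
      by (rule walkS_Union) (use finI IsI walk Cnn disj in \<open>auto intro: finite_subset disjoint_family_on_mono\<close>)
    then show ?thesis using that unfolding W_def by blast
  qed
  have small1: "(\<Sum>x\<in>Us. infdist x (Us - {x})) \<le> (\<Sum>i\<in>Is. C i)"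
  proof (cases "2 \<le> card W")
    case True then show ?thesis unfolding Us_def using walkS_cyc[OF yW finW] by simp
  next
    case False then show ?thesis unfolding Us_def by (simp add: sum_nonneg Cnn)
  qed
  have small2: "c * C i \<le> C i - r i" if "i \<in> Is" for i
  proof -
    have iI: "i \<in> I" using that IsI by blast
    have "real (card (S i)) / real K \<le> lam + eps"
      using that Kpos unfolding Is_def by (simp add: divide_le_eq)
    then have "real (card (S i)) / real K * C i \<le> (lam + eps) * C i" using Cnn[of i] by (rule mult_right_mono)
    then show ?thesis using rb[OF iI] unfolding c_def by (simp add: algebra_simps)
  qed
  have smallF: "c * (\<Sum>x\<in>Us. infdist x (Us - {x})) \<le> (\<Sum>i\<in>Is. C i - r i)"
  proof -
    have "c * (\<Sum>x\<in>Us. infdist x (Us - {x})) \<le> c * (\<Sum>i\<in>Is. C i)"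
      using small1 c0 by (simp add: mult_left_mono)
    also have "\<dots> = (\<Sum>i\<in>Is. c * C i)" by (simp add: sum_distrib_left)
    also have "\<dots> \<le> (\<Sum>i\<in>Is. C i - r i)" by (rule sum_mono) (rule small2)
    finally show ?thesis .
  qed
  define p where "p i = nat \<lceil>g * real (card (S i))\<rceil>" for i
  have pprops: "2 \<le> p i \<and> p i \<le> card (S i) \<and> c * real (p i) / (real (p i) - 1) \<le> 1 - real (p i) / real K
         \<and> real (p i) \<ge> g * real (card (S i))" if "i \<in> Ib" for i
  proof -
    have "(lam + eps) * real K < real (card (S i))" "card (S i) \<le> K"
      using that cardS unfolding Ib_def Is_def by auto
    from num_big[OF l e le K1 K2 this, of "p i"] show ?thesis unfolding p_def g_def c_def by simp
  qed
  have exBR: "\<forall>i\<in>Ib. \<exists>B R. B \<subseteq> S i \<and> card B = p i \<and> 0 \<le> R \<and>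
     (1 - real (p i) / real K) * R \<le> C i - r i \<and>
     (\<Sum>x\<in>B. infdist x (B - {x})) * (real (p i) - 1) \<le> R * real (p i)"
  proof
    fix i assume i: "i \<in> Ib"
    have iI: "i \<in> I" using i unfolding Ib_def by blast
    obtain y where y: "walkS dep (C i) (S i) y" using walk[OF iI] by blast
    show "\<exists>B R. B \<subseteq> S i \<and> card B = p i \<and> 0 \<le> R \<and>
     (1 - real (p i) / real K) * R \<le> C i - r i \<and>
     (\<Sum>x\<in>B. infdist x (B - {x})) * (real (p i) - 1) \<le> R * real (p i)"
      using walkS_big[OF y finS, of "p i" K] pprops[OF i] cardS[OF iI] unfolding r_def by blast
  qed
  obtain B where B1: "\<forall>i\<in>Ib. \<exists>R. B i \<subseteq> S i \<and> card (B i) = p i \<and> 0 \<le> R \<and>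
     (1 - real (p i) / real K) * R \<le> C i - r i \<and>
     (\<Sum>x\<in>B i. infdist x (B i - {x})) * (real (p i) - 1) \<le> R * real (p i)"
    using bchoice[OF exBR] by blast
  obtain R where BR: "\<forall>i\<in>Ib. B i \<subseteq> S i \<and> card (B i) = p i \<and> 0 \<le> R i \<and>
     (1 - real (p i) / real K) * R i \<le> C i - r i \<and>
     (\<Sum>x\<in>B i. infdist x (B i - {x})) * (real (p i) - 1) \<le> R i * real (p i)"
    using bchoice[OF B1] by blast
  have bigF: "c * (\<Sum>x\<in>B i. infdist x (B i - {x})) \<le> C i - r i" if i: "i \<in> Ib" for i
  proof -
    define sB where "sB = (\<Sum>x\<in>B i. infdist x (B i - {x}))"
    have pp: "2 \<le> p i" "c * real (p i) / (real (p i) - 1) \<le> 1 - real (p i) / real K" using pprops[OF i] by auto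
    have q0: "real (p i) - 1 > 0" using pp by simp
    have h1: "sB * (real (p i) - 1) \<le> R i * real (p i)" "0 \<le> R i"
      "(1 - real (p i) / real K) * R i \<le> C i - r i" using BR i unfolding sB_def by auto
    have "sB \<le> R i * real (p i) / (real (p i) - 1)" using h1(1) q0 by (simp add: le_divide_eq)
    then have "c * sB \<le> c * (R i * real (p i) / (real (p i) - 1))" using c0(1) by (rule mult_left_mono)
    also have "\<dots> = (c * real (p i) / (real (p i) - 1)) * R i" by simp
    also have "\<dots> \<le> (1 - real (p i) / real K) * R i" by (rule mult_right_mono[OF pp(2) h1(2)])
    also have "\<dots> \<le> C i - r i" using h1(3) .
    finally show ?thesis unfolding sB_def .
  qed
  define J where "J = insert m I"
  define P where "P i = (if i = m then Us else if i \<in> Ib then B i else {})" for i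
  define U where "U = (\<Union>i\<in>J. P i)"
  have mI: "m \<notin> I" unfolding I_def by simp
  have UsW: "Us \<subseteq> W" unfolding Us_def by auto
  have PS: "P i \<subseteq> S i" if "i \<in> I" for i using that BR mI unfolding P_def by auto
  have finJ: "finite J" unfolding J_def using finI by simp
  have finP: "finite (P i)" for i
  proof -
    have "finite Us" using finW UsW finite_subset by blast
    moreover have "finite (B i)" if "i \<in> Ib" using that BR finS[of i] finite_subset by blast
    ultimately show ?thesis unfolding P_def by auto
  qed
  have P2: "P i = {} \<or> card (P i) \<ge> 2" if "i \<in> J" for i
    unfolding P_def Us_def using BR pprops by auto
  have disjP: "disjoint_family_on P J"
    unfolding disjoint_family_on_def
  proof (intro ballI impI)
    fix i j assume ij: "i \<in> J" "j \<in> J" "i \<noteq> j"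
    have cross: "P a \<inter> P b = {}" if "a \<in> I" "b = m" for a b
    proof (cases "a \<in> Ib")
      case True
      have "P a \<subseteq> S a" using PS[OF \<open>a \<in> I\<close>] .
      moreover have "P b \<subseteq> W" using that UsW unfolding P_def by simp
      moreover have "S a \<inter> W = {}"
      proof -
        have "S a \<inter> S k = {}" if "k \<in> Is" for k
        proof -
          have "k \<noteq> a" using that True unfolding Ib_def by blast
          then show ?thesis using disj \<open>a \<in> I\<close> that IsI unfolding disjoint_family_on_def by blast
        qed
        then show ?thesis unfolding W_def by blast
      qed
      ultimately show ?thesis by blast
    next
      case False then show ?thesis using that mI unfolding P_def by auto
    qed
    show "P i \<inter> P j = {}"
    proof (cases "i = m")
      case True then show ?thesis using cross[of j i] ij unfolding J_def by blast
    next
      case False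
      show ?thesis
      proof (cases "j = m")
        case True then show ?thesis using cross[of i j] ij False unfolding J_def by blast
      next
        case False
        then have "i \<in> I" "j \<in> I" using ij \<open>i \<noteq> m\<close> unfolding J_def by auto
        then show ?thesis using PS disj ij(3) unfolding disjoint_family_on_def by blast
      qed
    qed
  qed
  have UV: "U \<subseteq> V"
  proof -
    have "P i \<subseteq> V" if "i \<in> J" for i
    proof (cases "i = m")
      case True then show ?thesis using UsW Ssub IsI unfolding P_def W_def by auto
    next
      case False then show ?thesis using that PS Ssub unfolding J_def by blast
    qed
    then show ?thesis unfolding U_def by blast
  qed
  have sumP: "(\<Sum>i\<in>J. \<Sum>x\<in>P i. infdist x (P i - {x}))
      = (\<Sum>x\<in>Us. infdist x (Us - {x})) + (\<Sum>i\<in>Ib. \<Sum>x\<in>B i. infdist x (B i - {x}))"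
  proof -
    have "(\<Sum>i\<in>J. \<Sum>x\<in>P i. infdist x (P i - {x}))
        = (\<Sum>x\<in>Us. infdist x (Us - {x})) + (\<Sum>i\<in>I. \<Sum>x\<in>P i. infdist x (P i - {x}))"
      unfolding J_def using finI mI by (simp add: P_def)
    also have "(\<Sum>i\<in>I. \<Sum>x\<in>P i. infdist x (P i - {x})) = (\<Sum>i\<in>Ib. \<Sum>x\<in>P i. infdist x (P i - {x}))"
      by (rule sum.mono_neutral_right) (use finI mI in \<open>auto simp: P_def Ib_def\<close>)
    also have "\<dots> = (\<Sum>i\<in>Ib. \<Sum>x\<in>B i. infdist x (B i - {x}))"
      by (rule sum.cong) (use mI in \<open>auto simp: P_def Ib_def\<close>)
    finally show ?thesis .
  qed
  have sumU: "(\<Sum>x\<in>U. infdist x (U - {x})) \<le> (\<Sum>i\<in>J. \<Sum>x\<in>P i. infdist x (P i - {x}))"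
    unfolding U_def by (rule union_sum[OF finJ disjP]) (use finP P2 in auto)
  have ineq: "(\<Sum>t\<leftarrow>T. tour_cost dep t) \<ge> rad dep V K + c * (\<Sum>x\<in>U. infdist x (U - {x}))"
  proof -
    have "c * (\<Sum>x\<in>U. infdist x (U - {x}))
        \<le> c * ((\<Sum>x\<in>Us. infdist x (Us - {x})) + (\<Sum>i\<in>Ib. \<Sum>x\<in>B i. infdist x (B i - {x})))"
      using sumU sumP c0 by (simp add: mult_left_mono)
    also have "\<dots> = c * (\<Sum>x\<in>Us. infdist x (Us - {x})) + (\<Sum>i\<in>Ib. c * (\<Sum>x\<in>B i. infdist x (B i - {x})))"
      by (simp add: algebra_simps sum_distrib_left)
    also have "\<dots> \<le> (\<Sum>i\<in>Is. C i - r i) + (\<Sum>i\<in>Ib. C i - r i)"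
      using smallF sum_mono[of Ib "\<lambda>i. c * (\<Sum>x\<in>B i. infdist x (B i - {x}))" "\<lambda>i. C i - r i"] bigF
      by (meson add_mono)
    also have "\<dots> = (\<Sum>i\<in>I. C i - r i)"
      using sum.subset_diff[OF IsI finI, of "\<lambda>i. C i - r i"] unfolding Ib_def by simp
    also have "\<dots> = (\<Sum>i\<in>I. C i) - (\<Sum>i\<in>I. r i)" by (simp add: sum_subtractf)
    finally show ?thesis using costeq radeq by simp
  qed
  have cardU: "card U = card Us + (\<Sum>i\<in>Ib. p i)"
  proof -
    have "card U = (\<Sum>i\<in>J. card (P i))"
      unfolding U_def by (rule card_UN_disjoint) (use finJ finP disjP in \<open>auto simp: disjoint_family_on_def\<close>)
    also have "\<dots> = card Us + (\<Sum>i\<in>I. card (P i))" unfolding J_def using finI mI by (simp add: P_def)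
    also have "(\<Sum>i\<in>I. card (P i)) = (\<Sum>i\<in>Ib. card (P i))"
      by (rule sum.mono_neutral_right) (use finI mI in \<open>auto simp: P_def Ib_def\<close>)
    also have "\<dots> = (\<Sum>i\<in>Ib. p i)"
      by (rule sum.cong) (use mI BR in \<open>auto simp: P_def Ib_def\<close>)
    finally show ?thesis .
  qed
  have cardW: "card W = (\<Sum>i\<in>Is. card (S i))"
    unfolding W_def
  proof (rule card_UN_disjoint)
    show "finite Is" using finI IsI finite_subset by blast
    show "\<forall>i\<in>Is. finite (S i)" using finS by blast
    show "\<forall>i\<in>Is. \<forall>j\<in>Is. i \<noteq> j \<longrightarrow> S i \<inter> S j = {}"
      using disj IsI unfolding disjoint_family_on_def by blast
  qed
  have cardV: "card V = (\<Sum>i\<in>I. card (S i))"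
    unfolding Vun by (rule card_UN_disjoint) (use finI finS disj in \<open>auto simp: disjoint_family_on_def\<close>)
  have cUs: "real (card Us) \<ge> real (card W) - 1" unfolding Us_def by auto
  have cB: "real (\<Sum>i\<in>Ib. p i) \<ge> g * (\<Sum>i\<in>Ib. real (card (S i)))"
  proof -
    have "g * (\<Sum>i\<in>Ib. real (card (S i))) = (\<Sum>i\<in>Ib. g * real (card (S i)))" by (simp add: sum_distrib_left)
    also have "\<dots> \<le> (\<Sum>i\<in>Ib. real (p i))" by (rule sum_mono) (use pprops in auto)
    finally show ?thesis by simp
  qed
  have g1: "0 < g" "g \<le> 1" using l e le g_def by auto
  have splitV: "real (card V) = (\<Sum>i\<in>Is. real (card (S i))) + (\<Sum>i\<in>Ib. real (card (S i)))"
  proof -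
    have "real (card V) = (\<Sum>i\<in>I. real (card (S i)))" using cardV by simp
    also have "\<dots> = (\<Sum>i\<in>Ib. real (card (S i))) + (\<Sum>i\<in>Is. real (card (S i)))"
      using sum.subset_diff[OF IsI finI] unfolding Ib_def by blast
    finally show ?thesis by simp
  qed
  have "real (card U) \<ge> g * real (card V) - 1"
  proof -
    have a: "(\<Sum>i\<in>Is. real (card (S i))) \<ge> g * (\<Sum>i\<in>Is. real (card (S i)))"
      using g1 by (simp add: mult_left_le_one_le sum_nonneg)
    have "real (card U) \<ge> (\<Sum>i\<in>Is. real (card (S i))) - 1 + g * (\<Sum>i\<in>Ib. real (card (S i)))"
      using cardU cUs cB cardW by simp
    then show ?thesis using a splitV by (simp add: algebra_simps)
  qed
  moreover have "g * real (card V) - 1 > (lam + eps/2) * real (card V)"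
    using nV unfolding g_def by (simp add: algebra_simps)
  ultimately have "real (card U) > (lam + eps/2) * real (card V)" by linarith
  then show ?thesis using UV ineq unfolding c_def by blast
qed


theorem theorem10:
  fixes lam eps :: real and k :: "nat \<Rightarrow> nat"
  assumes "lam > 0" and "eps > 0" and "lam + eps < 1"
    and "filterlim k at_top at_top"
  shows "\<exists>N. \<forall>n\<ge>N. \<forall>(dep::'a::metric_space) V. finite V \<and> card V = n \<longrightarrow>
           (\<exists>U\<subseteq>V. real (card U) > (lam + eps / 2) * real n \<and>
              OPT dep V (k n) \<ge> rad dep V (k n) + (1 - lam - eps) * (\<Sum>x\<in>U. infdist x (U - {x})))"
proof -
  note l = assms(1) and e = assms(2) and le = assms(3)
  define g where "g = lam + 3*eps/4"
  define K0 where "K0 = nat \<lceil>max (8/eps) ((8/eps + 1) / (g * (lam + eps)))\<rceil>"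
  have ga: "0 < g * (lam + eps)" using l e g_def by simp
  have ev: "eventually (\<lambda>n. K0 \<le> k n) sequentially"
    using assms(4) unfolding filterlim_at_top by blast
  then obtain N1 where N1: "\<And>n. n \<ge> N1 \<Longrightarrow> K0 \<le> k n" unfolding eventually_sequentially by blast
  define N where "N = max N1 (nat \<lceil>4/eps\<rceil> + 1)"
  show ?thesis
  proof (rule exI[of _ N], intro allI impI, elim conjE)
    fix n :: nat and dep :: 'a and V :: "'a set"
    assume nN: "N \<le> n" and fin: "finite V" and cV: "card V = n"
    define K where "K = k n"
    have KK0: "real K0 \<le> real K" using N1[of n] nN unfolding N_def K_def by simp
    have K0a: "8/eps \<le> real K0" "(8/eps + 1) / (g * (lam + eps)) \<le> real K0"
      unfolding K0_def by linarith+
    have K1: "real K * eps \<ge> 8"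
    proof -
      have "8/eps \<le> real K" using K0a KK0 by linarith
      then show ?thesis using e by (simp add: divide_le_eq)
    qed
    have K2: "(lam + 3*eps/4) * (lam + eps) * real K \<ge> 8/eps + 1"
    proof -
      have "(8/eps + 1) / (g * (lam + eps)) \<le> real K" using K0a KK0 by linarith
      then show ?thesis using ga unfolding g_def by (simp add: divide_le_eq mult.commute)
    qed
    have Kpos: "1 \<le> K"
    proof -
      have "real K * eps > 0" using K1 by linarith
      then have "K \<noteq> 0" by (metis mult_eq_0_iff of_nat_0 order_less_irrefl)
      then show ?thesis by simp
    qed
    have n4: "real n > 4/eps"
    proof -
      have "real n \<ge> real (nat \<lceil>4/eps\<rceil> + 1)" using nN unfolding N_def by simp
      moreover have "real (nat \<lceil>4/eps\<rceil>) \<ge> 4/eps" by linarith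
      ultimately show ?thesis by simp
    qed
    have nV: "real (card V) * eps > 4" using n4 e cV by (simp add: divide_less_eq)
    have npos: "0 < real n" using n4 e by (smt (verit) divide_pos_pos)
    define A where "A = {U. U \<subseteq> V \<and> real (card U) > (lam + eps/2) * real n}"
    define f where "f U = (\<Sum>x\<in>U. infdist x (U - {x}))" for U :: "'a set"
    have finA: "finite A" unfolding A_def using fin by simp
    have VA: "V \<in> A"
    proof -
      have "(lam + eps/2) * real n < 1 * real n" using npos le e by (intro mult_strict_right_mono) auto
      then show ?thesis unfolding A_def using cV by simp
    qed
    define M where "M = Min (f ` A)"
    have "M \<in> f ` A" unfolding M_def using finA VA by (intro Min_in) auto
    then obtain U0 where U0: "U0 \<in> A" "f U0 = M" by blast
    have U0min: "f U0 \<le> f U" if "U \<in> A" for U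
      unfolding U0(2) M_def using finA that by (intro Min_le) auto
    define Costs where "Costs = {(\<Sum>t\<leftarrow>T. tour_cost dep t) | T. feasible_solution V K T}"
    have ne: "Costs \<noteq> {}"
    proof -
      obtain xs where xs: "set xs = V" using finite_list[OF fin] by blast
      have "feasible_solution V K (map (\<lambda>x. [x]) xs)"
        unfolding feasible_solution_def using xs Kpos by auto
      then show ?thesis unfolding Costs_def by blast
    qed
    have "rad dep V K + (1 - lam - eps) * f U0 \<le> Inf Costs"
    proof (rule cInf_greatest[OF ne])
      fix z assume "z \<in> Costs"
      then obtain T where T: "feasible_solution V K T" "z = (\<Sum>t\<leftarrow>T. tour_cost dep t)"
        unfolding Costs_def by blast
      obtain U where U: "U \<subseteq> V" "real (card U) > (lam + eps/2) * real (card V)"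
        "(\<Sum>t\<leftarrow>T. tour_cost dep t) \<ge> rad dep V K + (1 - lam - eps) * (\<Sum>x\<in>U. infdist x (U - {x}))"
        using main_T[OF l e le K1 K2 nV fin T(1), of dep] by blast
      have "U \<in> A" unfolding A_def using U cV by simp
      then have "f U0 \<le> f U" by (rule U0min)
      then have "(1 - lam - eps) * f U0 \<le> (1 - lam - eps) * f U" using le by (intro mult_left_mono) auto
      then show "rad dep V K + (1 - lam - eps) * f U0 \<le> z" using U(3) T(2) unfolding f_def by simp
    qed
    then have "OPT dep V K \<ge> rad dep V K + (1 - lam - eps) * f U0" unfolding OPT_def Costs_def by simp
    moreover have "U0 \<subseteq> V" "real (card U0) > (lam + eps/2) * real n" using U0(1) unfolding A_def by auto
    ultimately show "\<exists>U\<subseteq>V. real (card U) > (lam + eps / 2) * real n \<and>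
              OPT dep V (k n) \<ge> rad dep V (k n) + (1 - lam - eps) * (\<Sum>x\<in>U. infdist x (U - {x}))"
      unfolding K_def f_def by blast
  qed
qed

end
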